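(* Let $G=(V,E,H)$ be a HEDG and $\mathbb{P}_V$ a probability distribution on $\mathcal{X}_V=\prod_{v\in V}\mathcal{X}_v$ (standard Borel spaces) such that $(G,\mathbb{P}_V)$ satisfies the loop-wisely solvable structural equations property (lsSEP). Then for every subset $W\subseteq V$, the pair $(G^{\mathrm{marg}\setminus W},\mathbb{P}_{V\setminus W})$ also satisfies lsSEP, where $\mathbb{P}_{V\setminus W}$ is the marginal of $\mathbb{P}_V$ on $\mathcal{X}_{V\setminus W}$.
   Context: HEDG $G=(V,E,H)$: $V$ finite, $E\subseteq V\times V$ (self-loops allowed), $H$ a simplicial complex on $V$ (contains singletons, closed under subsets), $\tilde H$ its inclusion-maximal elements. $\mathrm{Pa}^G(S)=\{u:(u,v)\in E\text{ for some }v\in S\}$. A strongly connected induced sub-HEDG (loop) is a nonempty $S\subseteq V$ such that any two nodes of $S$ are joined by directed paths in both directions using only nodes of $S$ (singletons are loops). Marginalization $G^{\mathrm{marg}\setminus W}=(V\setminus W,E',H')$: $v_1\to v_2\in E'$ iff $G$ has a directed path $v_1\to u_1\to\cdots\to u_r\to v_2$ ($r\ge0$, all $u_i\in W$); $F'\subseteq V\setminus W$ is in $H'$ iff there is $F\in H$, $F\subseteq F'\cup W$, such that each $v\in F'$ lies in $F\setminus W$ or is reached by a directed path $u_1\to\cdots\to u_r\to v$ ($r\ge1$, $u_i\in W$, $u_1\in F$). lsSEP for $(G,\mathbb{P}_V)$: there exist a probability space $(\Omega,\mathfrak A,\mathbb P)$, jointly independent random variables $E_F:\Omega\to\mathcal{E}_F$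 ($F\in\tilde H$) in standard Borel spaces, measurable $f_v:\mathcal{X}_{\mathrm{Pa}^G(v)}\times\mathcal{E}_v\to\mathcal{X}_v$ with $\mathcal{E}_v=\prod_{F\in\tilde H,v\in F}\mathcal{E}_F$, random variables $X_v:\Omega\to\mathcal{X}_v$ with $X_v=f_v(X_{\mathrm{Pa}^G(v)},E_v)$ a.s. ($E_v=(E_F)_{F\ni v}$) and joint law of $(X_v)_{v\in V}$ equal to $\mathbb{P}_V$, and for every loop $S$ and every $v\in S$ a measurable $\hat g_{S,v}:\mathcal{X}_{\mathrm{Pa}^G(S)\setminus S}\times\mathcal{E}_S\to\mathcal{X}_v$ with $X_v=\hat g_{S,v}(X_{\mathrm{Pa}^G(S)\setminus S},E_S)$ a.s., where $\mathcal{E}_S=\prod_{F\in\tilde H,F\cap S\ne\emptyset}\mathcal{E}_F$ and $E_S=(E_F)_{F\cap S\neq\emptyset}$. *)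

theory Defs
  imports "HOL-Probability.Probability"
begin

definition standard_borel :: "'a measure \<Rightarrow> bool" where
  "standard_borel M \<longleftrightarrow>
     (\<exists>T :: 'a topology. completely_metrizable_space T \<and> separable_space T \<and>
        topspace T = space M \<and> sets M = sigma_sets (topspace T) {U. openin T U})"

definition HEDG :: "'v set \<Rightarrow> ('v \<times> 'v) set \<Rightarrow> 'v set set \<Rightarrow> bool" where
  "HEDG V E H \<longleftrightarrow> finite V \<and> E \<subseteq> V \<times> V \<and> H \<subseteq> Pow V \<and>
     (\<forall>v\<in>V. {v} \<in> H) \<and> (\<forall>F\<in>H. \<forall>F'. F' \<subseteq> F \<longrightarrow> F' \<in> H)"

definition maxH :: "'v set set \<Rightarrow> 'v set set" where
  "maxH H = {F \<in> H. \<forall>F'\<in>H. F \<subseteq> F' \<longrightarrow> F' = F}"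

definition Pa :: "('v \<times> 'v) set \<Rightarrow> 'v set \<Rightarrow> 'v set" where
  "Pa E S = {u. \<exists>v\<in>S. (u, v) \<in> E}"

definition is_loop :: "'v set \<Rightarrow> ('v \<times> 'v) set \<Rightarrow> 'v set \<Rightarrow> bool" where
  "is_loop V E S \<longleftrightarrow> S \<noteq> {} \<and> S \<subseteq> V \<and>
     (\<forall>u\<in>S. \<forall>w\<in>S. (u, w) \<in> (E \<inter> (S \<times> S))\<^sup>*)"

text \<open>(a,b) \<in> via E W  iff there is a directed path a \<rightarrow> u1 \<rightarrow> ... \<rightarrow> ur \<rightarrow> b
with r \<ge> 0 and all intermediate nodes u_i in W.\<close>
definition via :: "('v \<times> 'v) set \<Rightarrow> 'v set \<Rightarrow> ('v \<times> 'v) set" where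
  "via E W = (E \<inter> (UNIV \<times> W))\<^sup>* O E"

definition margE :: "'v set \<Rightarrow> ('v \<times> 'v) set \<Rightarrow> 'v set \<Rightarrow> ('v \<times> 'v) set" where
  "margE V E W = {(a, b). a \<in> V - W \<and> b \<in> V - W \<and> (a, b) \<in> via E W}"

definition margH :: "'v set \<Rightarrow> ('v \<times> 'v) set \<Rightarrow> 'v set set \<Rightarrow> 'v set \<Rightarrow> 'v set set" where
  "margH V E H W = {F'. F' \<subseteq> V - W \<and>
     (\<exists>F\<in>H. F \<subseteq> F' \<union> W \<and>
        (\<forall>v\<in>F'. v \<in> F - W \<or> (\<exists>u1\<in>F. u1 \<in> W \<and> (u1, v) \<in> via E W)))}"

text \<open>The probability space lives on type 'w and the
noise spaces on type 'n (these are existentially quantified in the paper; in HOL the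
carrier types are parameters).\<close>
definition lsSEP :: "'v set \<Rightarrow> ('v \<times> 'v) set \<Rightarrow> 'v set set \<Rightarrow> ('v \<Rightarrow> 'x measure) \<Rightarrow>
    ('v \<Rightarrow> 'x) measure \<Rightarrow> 'w itself \<Rightarrow> 'n itself \<Rightarrow> bool" where
  "lsSEP V E H M P (_ :: 'w itself) (_ :: 'n itself) \<longleftrightarrow>
    (\<exists>(\<Omega> :: 'w measure) (N :: 'v set \<Rightarrow> 'n measure) (Ev :: 'v set \<Rightarrow> 'w \<Rightarrow> 'n)
       (f :: 'v \<Rightarrow> ('v \<Rightarrow> 'x) \<times> ('v set \<Rightarrow> 'n) \<Rightarrow> 'x) (X :: 'v \<Rightarrow> 'w \<Rightarrow> 'x)
       (g :: 'v set \<Rightarrow> 'v \<Rightarrow> ('v \<Rightarrow> 'x) \<times> ('v set \<Rightarrow> 'n) \<Rightarrow> 'x).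
      prob_space \<Omega> \<and>
      (\<forall>F\<in>maxH H. standard_borel (N F) \<and> Ev F \<in> measurable \<Omega> (N F)) \<and>
      prob_space.indep_vars \<Omega> N Ev (maxH H) \<and>
      (\<forall>v\<in>V. f v \<in> measurable
          (PiM (Pa E {v}) M \<Otimes>\<^sub>M PiM {F \<in> maxH H. v \<in> F} N) (M v)) \<and>
      (\<forall>v\<in>V. X v \<in> measurable \<Omega> (M v)) \<and>
      (\<forall>v\<in>V. AE \<omega> in \<Omega>. X v \<omega> = f v (restrict (\<lambda>u. X u \<omega>) (Pa E {v}),
                                         restrict (\<lambda>F. Ev F \<omega>) {F \<in> maxH H. v \<in> F})) \<and>
      distr \<Omega> (PiM V M) (\<lambda>\<omega>. restrict (\<lambda>v. X v \<omega>) V) = P \<and>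
      (\<forall>S. is_loop V E S \<longrightarrow> (\<forall>v\<in>S.
          g S v \<in> measurable
            (PiM (Pa E S - S) M \<Otimes>\<^sub>M PiM {F \<in> maxH H. F \<inter> S \<noteq> {}} N) (M v) \<and>
          (AE \<omega> in \<Omega>. X v \<omega> = g S v (restrict (\<lambda>u. X u \<omega>) (Pa E S - S),
                                        restrict (\<lambda>F. Ev F \<omega>) {F \<in> maxH H. F \<inter> S \<noteq> {}})))))"

end

theory Submission
  imports Defs
begin

lemma metr_sep_second_countable:
  assumes "metrizable_space T" "separable_space T"
  shows "second_countable T"
proof -
  obtain M d where md: "Metric_space M d" "T = Metric_space.mtopology M d"
    using assms(1) unfolding metrizable_space_def by blast
  interpret Metric_space M d by fact
  obtain C where C: "countable C" "C \<subseteq> M" "mtopology closure_of C = M"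
    using assms(2) md unfolding separable_space_def by auto
  define B where "B = (\<lambda>(c,n::nat). mball c (1 / Suc n)) ` (C \<times> UNIV)"
  have "countable B" unfolding B_def using C(1) by auto
  moreover have "\<forall>V\<in>B. openin T V" unfolding B_def md by auto
  moreover have "\<exists>V\<in>B. x \<in> V \<and> V \<subseteq> U" if "openin T U" "x \<in> U" for U x
  proof -
    from that obtain r where r: "r > 0" "mball x r \<subseteq> U" and xM: "x \<in> M"
      unfolding md openin_mtopology by blast
    obtain n :: nat where n: "inverse (Suc n) < r / 2"
      using reals_Archimedean[of "r/2"] r(1) by auto
    have e: "(1::real) / Suc n < r / 2" using n by (simp add: field_simps)
    have "x \<in> mtopology closure_of C" using C(3) xM by simp
    then have "\<forall>r>0. \<exists>y\<in>C. y \<in> mball x r" unfolding metric_closure_of by blast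
    moreover have "(0::real) < 1 / real (Suc n)" by simp
    ultimately obtain y where y: "y \<in> C" "y \<in> mball x (1 / Suc n)" by blast
    have yM: "y \<in> M" using y C(2) by auto
    have "x \<in> mball y (1 / Suc n)" using y xM yM by (simp add: commute)
    moreover have "mball y (1 / Suc n) \<subseteq> mball x r"
    proof
      fix z assume "z \<in> mball y (1 / Suc n)"
      then have z: "z \<in> M" "d y z < 1 / Suc n" by auto
      have "d x z \<le> d x y + d y z" using triangle xM yM z(1) by blast
      also have "\<dots> < r" using y e z by auto
      finally show "z \<in> mball x r" using xM z by auto
    qed
    moreover have "mball y (1 / Suc n) \<in> B" unfolding B_def using y by auto
    ultimately show ?thesis using r by blast
  qed
  ultimately show ?thesis unfolding second_countable_def by blast
qed

lemma standard_borel_PiM: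
  assumes fin: "finite K" and sb: "\<forall>i\<in>K. standard_borel (N i)"
  shows "standard_borel (PiM K N)"
proof -
  have "\<forall>i\<in>K. \<exists>T. completely_metrizable_space T \<and> separable_space T \<and>
        topspace T = space (N i) \<and> sets (N i) = sigma_sets (topspace T) {U. openin T U}"
    using sb unfolding standard_borel_def by blast
  then obtain T where T: "\<And>i. i \<in> K \<Longrightarrow> completely_metrizable_space (T i) \<and> separable_space (T i) \<and>
        topspace (T i) = space (N i) \<and> sets (N i) = sigma_sets (topspace (T i)) {U. openin (T i) U}"
    by metis
  define P where "P = product_topology T K"
  have top: "topspace P = space (PiM K N)"
    unfolding P_def space_PiM by (auto simp: T intro!: PiE_cong)
  have cm: "completely_metrizable_space P"
    unfolding P_def completely_metrizable_space_product_topology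
    using fin T by (auto intro: countable_finite)
  have sep: "separable_space P"
  proof -
    have "\<forall>i\<in>K. \<exists>C. countable C \<and> C \<subseteq> topspace (T i) \<and> (T i) closure_of C = topspace (T i)"
      using T unfolding separable_space_def by blast
    then obtain C where C: "\<And>i. i \<in> K \<Longrightarrow> countable (C i) \<and> C i \<subseteq> topspace (T i) \<and> (T i) closure_of (C i) = topspace (T i)"
      by metis
    have "countable (PiE K C)" using fin C by (auto intro: countable_PiE)
    moreover have "PiE K C \<subseteq> topspace P" unfolding P_def using C by (auto intro: PiE_mono)
    moreover have "P closure_of (PiE K C) = topspace P"
      unfolding P_def closure_of_product_topology topspace_product_topology using C
      by (auto intro!: PiE_cong)
    ultimately show ?thesis unfolding separable_space_def by blast
  qed
  have sc: "\<And>i. i \<in> K \<Longrightarrow> second_countable (T i)"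
    using T metr_sep_second_countable completely_metrizable_imp_metrizable_space by blast
  have s1: "sets (PiM K N) \<subseteq> sigma_sets (topspace P) {U. openin P U}"
  proof -
    have "{f \<in> PiE K (\<lambda>i. space (N i)). f i \<in> A} \<in> sigma_sets (topspace P) {U. openin P U}"
      if i: "i \<in> K" and A: "A \<in> sets (N i)" for i A
    proof -
      have Ti: "topspace (T i) = space (N i)" "sets (N i) = sigma_sets (topspace (T i)) {U. openin (T i) U}"
        using T[OF i] by auto
      have Tall: "\<And>j. j \<in> K \<Longrightarrow> topspace (T j) = space (N j)" using T by blast
      have "A \<in> sigma_sets (topspace (T i)) {U. openin (T i) U}" using A Ti by simp
      then show ?thesis
      proof induct
        case (Basic a)
        have "{f \<in> PiE K (\<lambda>i. space (N i)). f i \<in> a} = PiE K (\<lambda>j. if j = i then a else topspace (T j))"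
          using Tall Ti i openin_subset[OF Basic[simplified]] unfolding PiE_def extensional_def Pi_def
          by (auto split: if_splits)
        moreover have "openin P (PiE K (\<lambda>j. if j = i then a else topspace (T j)))"
          unfolding P_def openin_PiE[OF fin] using Basic by auto
        ultimately show ?case by auto
      next
        case Empty then show ?case by (simp add: sigma_sets.Empty)
      next
        case (Compl a)
        have "{f \<in> PiE K (\<lambda>i. space (N i)). f i \<in> topspace (T i) - a} =
              topspace P - {f \<in> PiE K (\<lambda>i. space (N i)). f i \<in> a}"
          using top i Ti by (auto simp: space_PiM PiE_iff extensional_def)
        then show ?case by (simp only:) (rule sigma_sets.Compl, rule Compl(2))
      next
        case (Union a)
        have "{f \<in> PiE K (\<lambda>i. space (N i)). f i \<in> (\<Union>n. a n)} =
              (\<Union>n. {f \<in> PiE K (\<lambda>i. space (N i)). f i \<in> a n})" by auto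
        then show ?case by (simp only:) (rule sigma_sets.Union, rule Union(2))
      qed
    qed
    then have "{{f \<in> PiE K (\<lambda>i. space (N i)). f i \<in> A} | i A. i \<in> K \<and> A \<in> sets (N i)}
       \<subseteq> sigma_sets (topspace P) {U. openin P U}" by (intro subsetI) (clarsimp simp del: mem_Collect_eq)
    moreover have tp: "topspace P = PiE K (\<lambda>i. space (N i))" using top by (simp add: space_PiM)
    ultimately have "{{f \<in> PiE K (\<lambda>i. space (N i)). f i \<in> A} | i A. i \<in> K \<and> A \<in> sets (N i)}
       \<subseteq> sigma_sets (PiE K (\<lambda>i. space (N i))) {U. openin P U}" by (simp only: tp)
    then have "sigma_sets (PiE K (\<lambda>i. space (N i))) {{f \<in> PiE K (\<lambda>i. space (N i)). f i \<in> A} | i A. i \<in> K \<and> A \<in> sets (N i)}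
       \<subseteq> sigma_sets (PiE K (\<lambda>i. space (N i))) {U. openin P U}" by (rule sigma_sets_mono)
    then show ?thesis unfolding sets_PiM_single tp .
  qed
  have s2: "sigma_sets (topspace P) {U. openin P U} \<subseteq> sets (PiM K N)"
  proof -
    have "U \<in> sets (PiM K N)" if U: "openin P U" for U
    proof -
      obtain B where B: "\<And>i. i \<in> K \<Longrightarrow> countable (B i) \<and> (\<forall>V\<in>B i. openin (T i) V) \<and>
             (\<forall>U x. openin (T i) U \<and> x \<in> U \<longrightarrow> (\<exists>V\<in>B i. x \<in> V \<and> V \<subseteq> U))"
        using sc unfolding second_countable_def by metis
      define Fam where "Fam = (\<lambda>c. PiE K c) ` {c \<in> PiE K B. PiE K c \<subseteq> U}"
      have "countable Fam" unfolding Fam_def using fin B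
        by (intro countable_image countable_subset[OF _ countable_PiE[of K B]]) auto
      moreover have "Fam \<subseteq> sets (PiM K N)"
      proof
        fix S assume "S \<in> Fam"
        then obtain c where c: "c \<in> PiE K B" "S = PiE K c" unfolding Fam_def by auto
        have "c i \<in> sets (N i)" if "i \<in> K" for i
          using c(1) B[OF that] T[OF that] that by (auto simp: PiE_iff)
        then show "S \<in> sets (PiM K N)" using c(2) fin by (auto intro: sets_PiM_I_finite)
      qed
      moreover have "\<Union>Fam = U"
      proof
        show "\<Union>Fam \<subseteq> U" unfolding Fam_def by auto
        show "U \<subseteq> \<Union>Fam"
        proof
          fix x assume "x \<in> U"
          then obtain V where V: "\<forall>i\<in>K. openin (T i) (V i)" "x \<in> PiE K V" "PiE K V \<subseteq> U"
            using U unfolding P_def openin_product_topology_alt by blast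
          have "\<forall>i\<in>K. \<exists>b\<in>B i. x i \<in> b \<and> b \<subseteq> V i" using V B by (auto simp: PiE_iff)
          then obtain c0 where c0: "\<And>i. i \<in> K \<Longrightarrow> c0 i \<in> B i \<and> x i \<in> c0 i \<and> c0 i \<subseteq> V i" by metis
          define c where "c = restrict c0 K"
          have "c \<in> PiE K B" unfolding c_def using c0 by auto
          moreover have "x \<in> PiE K c" using c0 V(2) unfolding c_def PiE_iff by auto
          moreover have "PiE K c \<subseteq> PiE K V" unfolding c_def using c0 by (intro PiE_mono) auto
          ultimately show "x \<in> \<Union>Fam" unfolding Fam_def using V(3)
            by (intro UnionI[of "PiE K c"]) auto
        qed
      qed
      ultimately show ?thesis using sets.countable_Union by metis
    qed
    then show ?thesis unfolding top by (intro sets.sigma_sets_subset) auto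
  qed
  show ?thesis unfolding standard_borel_def
    using cm sep top s1 s2 by blast
qed


lemma via_E: "(a,b) \<in> E \<Longrightarrow> (a,b) \<in> via E W"
  unfolding via_def by auto

lemma via_app: "(a,w) \<in> via E W \<Longrightarrow> w \<in> W \<Longrightarrow> (w,b) \<in> E \<Longrightarrow> (a,b) \<in> via E W"
  unfolding via_def by (auto intro: rtrancl_into_rtrancl)

lemma via_pre: "(a,w) \<in> E \<Longrightarrow> w \<in> W \<Longrightarrow> (w,b) \<in> via E W \<Longrightarrow> (a,b) \<in> via E W"
  unfolding via_def by (auto intro: converse_rtrancl_into_rtrancl)

lemma via_trans: assumes "(a,w) \<in> via E W" "w \<in> W" "(w,b) \<in> via E W" shows "(a,b) \<in> via E W"
proof -
  obtain y where y: "(a,y) \<in> (E \<inter> UNIV \<times> W)\<^sup>*" "(y,w) \<in> E" using assms(1) unfolding via_def by auto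
  obtain z where z: "(w,z) \<in> (E \<inter> UNIV \<times> W)\<^sup>*" "(z,b) \<in> E" using assms(3) unfolding via_def by auto
  have "(a,w) \<in> (E \<inter> UNIV \<times> W)\<^sup>*" using y assms(2) by (auto intro: rtrancl_into_rtrancl)
  then have "(a,z) \<in> (E \<inter> UNIV \<times> W)\<^sup>*" using z(1) by (rule rtrancl_trans)
  then show ?thesis unfolding via_def using z(2) by auto
qed

lemma via_ext: "(c,u) \<in> (E \<inter> W \<times> W)\<^sup>* \<Longrightarrow> (p,c) \<in> via E W \<Longrightarrow> (p,u) \<in> via E W"
  by (induction rule: rtrancl_induct) (auto intro: via_app)

lemma via_pre_star: "(w,p) \<in> (E \<inter> W \<times> W)\<^sup>* \<Longrightarrow> (p,s) \<in> via E W \<Longrightarrow> (w,s) \<in> via E W"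
  by (induction rule: converse_rtrancl_induct) (auto intro: via_pre)

lemma rtrancl_restrict_path:
  assumes "(a,b) \<in> R\<^sup>*"
  shows "(a,b) \<in> (R \<inter> ({x. (a,x) \<in> R\<^sup>* \<and> (x,b) \<in> R\<^sup>*} \<times> {x. (a,x) \<in> R\<^sup>* \<and> (x,b) \<in> R\<^sup>*}))\<^sup>*"
  using assms
proof (induction rule: converse_rtrancl_induct)
  case base then show ?case by simp
next
  case (step a y)
  have 1: "(y,b) \<in> (R \<inter> ({x. (a,x) \<in> R\<^sup>* \<and> (x,b) \<in> R\<^sup>*} \<times> {x. (a,x) \<in> R\<^sup>* \<and> (x,b) \<in> R\<^sup>*}))\<^sup>*"
    using step.IH
    by (rule rtrancl_mono[THEN subsetD, rotated])
       (use step.hyps in \<open>auto intro: converse_rtrancl_into_rtrancl\<close>)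
  have 2: "(a,y) \<in> R \<inter> ({x. (a,x) \<in> R\<^sup>* \<and> (x,b) \<in> R\<^sup>*} \<times> {x. (a,x) \<in> R\<^sup>* \<and> (x,b) \<in> R\<^sup>*})"
    using step.hyps by (auto intro: converse_rtrancl_into_rtrancl)
  show ?case by (rule converse_rtrancl_into_rtrancl[OF 2 1])
qed


locale lsctx =
  fixes V :: "'v set" and E :: "('v \<times> 'v) set" and H :: "'v set set"
    and M :: "'v \<Rightarrow> 'x measure" and \<Omega> :: "'w measure" and N :: "'v set \<Rightarrow> 'n measure"
    and Ev :: "'v set \<Rightarrow> 'w \<Rightarrow> 'n" and X :: "'v \<Rightarrow> 'w \<Rightarrow> 'x"
    and g :: "'v set \<Rightarrow> 'v \<Rightarrow> ('v \<Rightarrow> 'x) \<times> ('v set \<Rightarrow> 'n) \<Rightarrow> 'x"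
  assumes hedg: "HEDG V E H"
  and gl: "\<And>S v. is_loop V E S \<Longrightarrow> v \<in> S \<Longrightarrow>
          g S v \<in> measurable
            (PiM (Pa E S - S) M \<Otimes>\<^sub>M PiM {F \<in> maxH H. F \<inter> S \<noteq> {}} N) (M v) \<and>
          (AE \<omega> in \<Omega>. X v \<omega> = g S v (restrict (\<lambda>u. X u \<omega>) (Pa E S - S),
                                        restrict (\<lambda>F. Ev F \<omega>) {F \<in> maxH H. F \<inter> S \<noteq> {}}))"
begin

definition det where
  "det v B K \<longleftrightarrow> (\<exists>h. h \<in> measurable (PiM B M \<Otimes>\<^sub>M PiM K N) (M v) \<and>
     (AE \<omega> in \<Omega>. X v \<omega> = h (restrict (\<lambda>u. X u \<omega>) B, restrict (\<lambda>F. Ev F \<omega>) K)))"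

lemma det_loop: "is_loop V E S \<Longrightarrow> v \<in> S \<Longrightarrow> det v (Pa E S - S) {F \<in> maxH H. F \<inter> S \<noteq> {}}"
  unfolding det_def using gl by blast

lemma det_mono:
  assumes "det v B K" "B \<subseteq> B'" "K \<subseteq> K'"
  shows "det v B' K'"
proof -
  obtain h where h: "h \<in> measurable (PiM B M \<Otimes>\<^sub>M PiM K N) (M v)"
    "AE \<omega> in \<Omega>. X v \<omega> = h (restrict (\<lambda>u. X u \<omega>) B, restrict (\<lambda>F. Ev F \<omega>) K)"
    using assms(1) unfolding det_def by blast
  define h' where "h' = (\<lambda>z. h (restrict (fst z) B, restrict (snd z) K))"
  have "(\<lambda>z. (restrict (fst z) B, restrict (snd z) K)) \<in>
      measurable (PiM B' M \<Otimes>\<^sub>M PiM K' N) (PiM B M \<Otimes>\<^sub>M PiM K N)"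
    by (intro measurable_Pair measurable_compose[OF measurable_fst measurable_restrict_subset]
        measurable_compose[OF measurable_snd measurable_restrict_subset] assms(2,3))
  then have "h' \<in> measurable (PiM B' M \<Otimes>\<^sub>M PiM K' N) (M v)"
    unfolding h'_def using h(1) by (rule measurable_compose)
  moreover have "AE \<omega> in \<Omega>. X v \<omega> = h' (restrict (\<lambda>u. X u \<omega>) B', restrict (\<lambda>F. Ev F \<omega>) K')"
  proof -
    have "restrict (restrict f B') B = restrict f B" "restrict (restrict k K') K = restrict k K" for f :: "'v \<Rightarrow> 'x" and k :: "'v set \<Rightarrow> 'n"
      using assms(2,3) by (simp_all add: restrict_restrict Int_absorb1)
    then show ?thesis using h(2) unfolding h'_def by simp
  qed
  ultimately show ?thesis unfolding det_def by blast
qed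

lemma det_base: "v \<in> B \<Longrightarrow> det v B K"
  unfolding det_def
  by (rule exI[of _ "\<lambda>z. fst z v"])
     (simp add: measurable_compose[OF measurable_fst measurable_component_singleton])

lemma det_trans:
  assumes fin: "finite B" and d: "det v B K" and du: "\<And>u. u \<in> B \<Longrightarrow> det u B' K"
  shows "det v B' K"
proof -
  obtain h where h: "h \<in> measurable (PiM B M \<Otimes>\<^sub>M PiM K N) (M v)"
    "AE \<omega> in \<Omega>. X v \<omega> = h (restrict (\<lambda>u. X u \<omega>) B, restrict (\<lambda>F. Ev F \<omega>) K)"
    using d unfolding det_def by blast
  have "\<forall>u\<in>B. \<exists>hu. hu \<in> measurable (PiM B' M \<Otimes>\<^sub>M PiM K N) (M u) \<and>
     (AE \<omega> in \<Omega>. X u \<omega> = hu (restrict (\<lambda>u. X u \<omega>) B', restrict (\<lambda>F. Ev F \<omega>) K))"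
    using du unfolding det_def by blast
  from bchoice[OF this] obtain hh where hh0: "\<forall>u\<in>B. hh u \<in> measurable (PiM B' M \<Otimes>\<^sub>M PiM K N) (M u) \<and>
    (AE \<omega> in \<Omega>. X u \<omega> = hh u (restrict (\<lambda>u. X u \<omega>) B', restrict (\<lambda>F. Ev F \<omega>) K))"
    by (elim exE)
  then have hh: "\<And>u. u \<in> B \<Longrightarrow> hh u \<in> measurable (PiM B' M \<Otimes>\<^sub>M PiM K N) (M u)"
    "\<And>u. u \<in> B \<Longrightarrow> (AE \<omega> in \<Omega>. X u \<omega> = hh u (restrict (\<lambda>u. X u \<omega>) B', restrict (\<lambda>F. Ev F \<omega>) K))"
    by auto
  define h' where "h' = (\<lambda>z. h (\<lambda>u\<in>B. hh u z, snd z))"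
  have "(\<lambda>z. (\<lambda>u\<in>B. hh u z, snd z)) \<in> measurable (PiM B' M \<Otimes>\<^sub>M PiM K N) (PiM B M \<Otimes>\<^sub>M PiM K N)"
    by (intro measurable_Pair measurable_restrict hh(1) measurable_snd)
  then have "h' \<in> measurable (PiM B' M \<Otimes>\<^sub>M PiM K N) (M v)"
    unfolding h'_def using h(1) by (rule measurable_compose)
  moreover have "AE \<omega> in \<Omega>. \<forall>u\<in>B. X u \<omega> = hh u (restrict (\<lambda>u. X u \<omega>) B', restrict (\<lambda>F. Ev F \<omega>) K)"
    using hh(2) fin by (intro AE_ball_countable') (auto intro: countable_finite)
  then have "AE \<omega> in \<Omega>. X v \<omega> = h' (restrict (\<lambda>u. X u \<omega>) B', restrict (\<lambda>F. Ev F \<omega>) K)"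
    using h(2)
  proof eventually_elim
    case (elim \<omega>)
    have "restrict (\<lambda>u. X u \<omega>) B = (\<lambda>u\<in>B. hh u (restrict (\<lambda>u. X u \<omega>) B', restrict (\<lambda>F. Ev F \<omega>) K))"
      using elim(1) by (auto simp: fun_eq_iff)
    then show ?case using elim(2) unfolding h'_def by simp
  qed
  ultimately show ?thesis unfolding det_def by blast
qed

end

context lsctx begin

lemma EV: "E \<subseteq> V \<times> V" "finite V"
  by (rule conjunct1[OF conjunct2[OF hedg[unfolded HEDG_def]]])
     (rule conjunct1[OF hedg[unfolded HEDG_def]])

lemma HV: "H \<subseteq> Pow V"
  by (rule conjunct1[OF conjunct2[OF conjunct2[OF hedg[unfolded HEDG_def]]]])

lemma Pa_fin: "finite (Pa E S)"
proof -
  have "Pa E S \<subseteq> V" unfolding Pa_def using EV by auto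
  then show ?thesis using EV finite_subset by blast
qed

lemma det_W:
  assumes WV: "W \<subseteq> V" and u: "u \<in> W"
  shows "det u {a \<in> V - W. (a,u) \<in> via E W}
           {F \<in> maxH H. \<exists>w\<in>F \<inter> W. (w,u) \<in> (E \<inter> W \<times> W)\<^sup>*}"
  using u
proof (induction "card {w \<in> W. (w,u) \<in> (E \<inter> W \<times> W)\<^sup>*}" arbitrary: u rule: less_induct)
  case less
  let ?R = "E \<inter> W \<times> W"
  define A where "A = (\<lambda>u. {w \<in> W. (w,u) \<in> ?R\<^sup>*})"
  define C where "C = {w \<in> A u. (u,w) \<in> ?R\<^sup>*}"
  have finA: "finite (A x)" for x
    by (rule finite_subset[OF _ EV(2)]) (use WV in \<open>auto simp: A_def\<close>)
  have uC: "u \<in> C" unfolding C_def A_def using less.prems by simp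
  have CW: "C \<subseteq> W" unfolding C_def A_def by auto
  have loop: "is_loop V E C"
    unfolding is_loop_def
  proof (intro conjI ballI)
    show "C \<noteq> {}" using uC by auto
    show "C \<subseteq> V" using CW WV by auto
    fix a b assume a: "a \<in> C" and b: "b \<in> C"
    have ab: "(a,b) \<in> ?R\<^sup>*" using a b unfolding C_def A_def by (auto intro: rtrancl_trans)
    have "?R \<inter> ({x. (a,x) \<in> ?R\<^sup>* \<and> (x,b) \<in> ?R\<^sup>*} \<times> {x. (a,x) \<in> ?R\<^sup>* \<and> (x,b) \<in> ?R\<^sup>*})
          \<subseteq> E \<inter> C \<times> C"
    proof
      fix p assume p: "p \<in> ?R \<inter> ({x. (a,x) \<in> ?R\<^sup>* \<and> (x,b) \<in> ?R\<^sup>*} \<times> {x. (a,x) \<in> ?R\<^sup>* \<and> (x,b) \<in> ?R\<^sup>*})"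
      obtain x y where xy: "p = (x,y)" by force
      have "x \<in> C" "y \<in> C"
        using p a b unfolding xy C_def A_def by (auto intro: rtrancl_trans)
      then show "p \<in> E \<inter> C \<times> C" using p xy by auto
    qed
    then show "(a,b) \<in> (E \<inter> C \<times> C)\<^sup>*"
      using rtrancl_restrict_path[OF ab] rtrancl_mono by blast
  qed
  have d0: "det u (Pa E C - C) {F \<in> maxH H. F \<inter> C \<noteq> {}}" using det_loop[OF loop uC] .
  have "{F \<in> maxH H. F \<inter> C \<noteq> {}} \<subseteq> {F \<in> maxH H. \<exists>w\<in>F \<inter> W. (w,u) \<in> ?R\<^sup>*}"
    using CW unfolding C_def A_def by blast
  then have d1: "det u (Pa E C - C) {F \<in> maxH H. \<exists>w\<in>F \<inter> W. (w,u) \<in> ?R\<^sup>*}"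
    using det_mono[OF d0] by blast
  show ?case
  proof (rule det_trans[OF _ d1])
    show "finite (Pa E C - C)" using Pa_fin by auto
    fix p assume p: "p \<in> Pa E C - C"
    then obtain c where c: "c \<in> C" "(p,c) \<in> E" unfolding Pa_def by auto
    have pV: "p \<in> V" using c EV by auto
    have cu: "(c,u) \<in> ?R\<^sup>*" using c unfolding C_def A_def by auto
    show "det p {a \<in> V - W. (a,u) \<in> via E W} {F \<in> maxH H. \<exists>w\<in>F \<inter> W. (w,u) \<in> ?R\<^sup>*}"
    proof (cases "p \<in> W")
      case False
      have "(p,u) \<in> via E W" using via_ext[OF cu via_E[OF c(2)]] .
      then show ?thesis using False pV by (intro det_base) auto
    next
      case True
      have pc: "(p,c) \<in> ?R" using True c CW by auto
      have pu: "(p,u) \<in> ?R\<^sup>*" using pc cu by (rule converse_rtrancl_into_rtrancl)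
      have sub: "A p \<subseteq> A u" unfolding A_def using pu by (auto intro: rtrancl_trans)
      have "u \<notin> A p"
      proof
        assume "u \<in> A p"
        then have "(u,p) \<in> ?R\<^sup>*" unfolding A_def by auto
        then have "p \<in> C" unfolding C_def A_def using True pu by auto
        then show False using p by auto
      qed
      moreover have "u \<in> A u" unfolding A_def using less.prems by auto
      ultimately have "A p \<subset> A u" using sub by blast
      then have "card (A p) < card (A u)" by (rule psubset_card_mono[OF finA])
      then have cl: "card {w \<in> W. (w,p) \<in> ?R\<^sup>*} < card {w \<in> W. (w,u) \<in> ?R\<^sup>*}" unfolding A_def .
      have IH: "det p {a \<in> V - W. (a,p) \<in> via E W} {F \<in> maxH H. \<exists>w\<in>F \<inter> W. (w,p) \<in> ?R\<^sup>*}"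
        by (rule less.hyps[OF cl True])
      show ?thesis
      proof (rule det_mono[OF IH])
        show "{a \<in> V - W. (a,p) \<in> via E W} \<subseteq> {a \<in> V - W. (a,u) \<in> via E W}"
          using via_ext[OF pu] by blast
        show "{F \<in> maxH H. \<exists>w\<in>F \<inter> W. (w,p) \<in> ?R\<^sup>*} \<subseteq> {F \<in> maxH H. \<exists>w\<in>F \<inter> W. (w,u) \<in> ?R\<^sup>*}"
          using pu by (blast intro: rtrancl_trans)
      qed
    qed
  qed
qed

end

context lsctx begin

lemma det_newloop:
  assumes WV: "W \<subseteq> V" and loop': "is_loop (V - W) (margE V E W) S'" and v: "v \<in> S'"
  shows "det v (Pa (margE V E W) S' - S')
     {F \<in> maxH H. \<exists>s\<in>S'. s \<in> F - W \<or> (\<exists>u1\<in>F. u1 \<in> W \<and> (u1,s) \<in> via E W)}"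
proof -
  let ?Rw = "E \<inter> UNIV \<times> W"
  let ?K0 = "{F \<in> maxH H. \<exists>s\<in>S'. s \<in> F - W \<or> (\<exists>u1\<in>F. u1 \<in> W \<and> (u1,s) \<in> via E W)}"
  let ?B0 = "Pa (margE V E W) S' - S'"
  define T where "T = {w\<in>W. \<exists>s1\<in>S'. \<exists>s2\<in>S'. (s1,w) \<in> via E W \<and> (w,s2) \<in> via E W}"
  define S where "S = S' \<union> T"
  have S'VW: "S' \<subseteq> V - W" using loop' unfolding is_loop_def by blast
  have S'conn: "\<forall>a\<in>S'. \<forall>b\<in>S'. (a,b) \<in> (margE V E W \<inter> S' \<times> S')\<^sup>*"
    using loop' unfolding is_loop_def by blast
  have TW: "T \<subseteq> W" unfolding T_def by auto
  have Tin: "\<exists>s1\<in>S'. \<exists>s2\<in>S'. (s1,w) \<in> via E W \<and> (w,s2) \<in> via E W" if "w \<in> T" for w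
    using that unfolding T_def by auto
  have to_S': "\<exists>s2\<in>S'. (y,s2) \<in> via E W \<or> y = s2" if "y \<in> S" for y
    using that Tin unfolding S_def by blast
  have Lpath: "(x,y) \<in> (E \<inter> S \<times> S)\<^sup>*" if x: "x \<in> S" and y: "y \<in> S" and xy: "(x,y) \<in> via E W" for x y
  proof -
    obtain z where z: "(x,z) \<in> ?Rw\<^sup>*" "(z,y) \<in> E" using xy unfolding via_def by blast
    define Z where "Z = {n. (x,n) \<in> ?Rw\<^sup>* \<and> (n,z) \<in> ?Rw\<^sup>*}"
    have s1: "\<exists>s1\<in>S'. (s1,n) \<in> via E W" if "(x,n) \<in> via E W" for n
    proof (cases "x \<in> S'")
      case True then show ?thesis using that by blast
    next
      case False
      then have "x \<in> T" using x unfolding S_def by auto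
      then obtain s1 where "s1 \<in> S'" "(s1,x) \<in> via E W" using Tin by blast
      then show ?thesis using via_trans[OF _ _ that] \<open>x \<in> T\<close> TW by blast
    qed
    have s2: "\<exists>s2\<in>S'. (n,s2) \<in> via E W" if n: "n \<in> W" "(n,y) \<in> via E W" for n
    proof (cases "y \<in> S'")
      case True then show ?thesis using that by blast
    next
      case False
      then have "y \<in> T" using y unfolding S_def by auto
      then obtain s2 where "s2 \<in> S'" "(y,s2) \<in> via E W" using Tin by blast
      then show ?thesis using via_trans[OF n(2) _] \<open>y \<in> T\<close> TW by blast
    qed
    have ZS: "n \<in> S" if "n \<in> Z" for n
    proof -
      have xn: "(x,n) \<in> ?Rw\<^sup>*" and nz: "(n,z) \<in> ?Rw\<^sup>*" using that unfolding Z_def by auto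
      from xn show ?thesis
      proof (cases rule: rtranclE)
        case base then show ?thesis using x by simp
      next
        case (step m)
        then have nW: "n \<in> W" by auto
        have "(x,n) \<in> via E W" unfolding via_def using step by auto
        then obtain a1 where a1: "a1 \<in> S'" "(a1,n) \<in> via E W" using s1 by blast
        have "(n,y) \<in> via E W" unfolding via_def using nz z(2) by auto
        then obtain a2 where a2: "a2 \<in> S'" "(n,a2) \<in> via E W" using s2 nW by blast
        have "n \<in> T" unfolding T_def using nW a1 a2 by blast
        then show ?thesis unfolding S_def by simp
      qed
    qed
    have "(x,z) \<in> (?Rw \<inter> Z \<times> Z)\<^sup>*" using rtrancl_restrict_path[OF z(1)] unfolding Z_def .
    moreover have "?Rw \<inter> Z \<times> Z \<subseteq> E \<inter> S \<times> S" using ZS by auto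
    ultimately have "(x,z) \<in> (E \<inter> S \<times> S)\<^sup>*" using rtrancl_mono by blast
    moreover have "z \<in> S" using ZS z(1) unfolding Z_def by simp
    ultimately show ?thesis using z(2) y by (auto intro: rtrancl_into_rtrancl)
  qed
  have SV: "S \<subseteq> V" unfolding S_def using S'VW TW WV by auto
  have loopS: "is_loop V E S"
    unfolding is_loop_def
  proof (intro conjI ballI)
    show "S \<noteq> {}" using v unfolding S_def by auto
    show "S \<subseteq> V" by (rule SV)
    fix a b assume a: "a \<in> S" and b: "b \<in> S"
    obtain sa where sa: "sa \<in> S'" "(a,sa) \<in> (E \<inter> S \<times> S)\<^sup>*"
    proof (cases "a \<in> S'")
      case True then show ?thesis using that by blast
    next
      case False
      then have "a \<in> T" using a unfolding S_def by auto
      then obtain s2 where "s2 \<in> S'" "(a,s2) \<in> via E W" using Tin by blast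
      then show ?thesis using that Lpath[OF a _ \<open>(a,s2) \<in> via E W\<close>] unfolding S_def by blast
    qed
    obtain sb where sb: "sb \<in> S'" "(sb,b) \<in> (E \<inter> S \<times> S)\<^sup>*"
    proof (cases "b \<in> S'")
      case True then show ?thesis using that by blast
    next
      case False
      then have "b \<in> T" using b unfolding S_def by auto
      then obtain s1 where "s1 \<in> S'" "(s1,b) \<in> via E W" using Tin by blast
      then show ?thesis using that Lpath[OF _ b \<open>(s1,b) \<in> via E W\<close>] unfolding S_def by blast
    qed
    have "(sa,sb) \<in> (margE V E W \<inter> S' \<times> S')\<^sup>*" using S'conn sa(1) sb(1) by blast
    then have "(sa,sb) \<in> (E \<inter> S \<times> S)\<^sup>*"
    proof (induction rule: rtrancl_induct)
      case base then show ?case by simp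
    next
      case (step y z)
      then have "(y,z) \<in> via E W" "y \<in> S" "z \<in> S" unfolding margE_def S_def by auto
      then have "(y,z) \<in> (E \<inter> S \<times> S)\<^sup>*" using Lpath by blast
      then show ?case using step.IH by (rule rtrancl_trans[rotated])
    qed
    then show "(a,b) \<in> (E \<inter> S \<times> S)\<^sup>*" using sa(2) sb(2) by (meson rtrancl_trans)
  qed
  have vS: "v \<in> S" using v unfolding S_def by simp
  have KS: "{F \<in> maxH H. F \<inter> S \<noteq> {}} \<subseteq> ?K0"
  proof
    fix F assume F: "F \<in> {F \<in> maxH H. F \<inter> S \<noteq> {}}"
    then obtain x where x: "x \<in> F" "x \<in> S" by auto
    show "F \<in> ?K0"
    proof (cases "x \<in> S'")
      case True then show ?thesis using F x S'VW by blast
    next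
      case False
      then have "x \<in> T" using x unfolding S_def by auto
      then obtain s2 where "s2 \<in> S'" "(x,s2) \<in> via E W" using Tin by blast
      then show ?thesis using F x \<open>x \<in> T\<close> TW by blast
    qed
  qed
  have d1: "det v (Pa E S - S) ?K0" using det_mono[OF det_loop[OF loopS vS] order_refl KS] .
  show ?thesis
  proof (rule det_trans[OF _ d1])
    show "finite (Pa E S - S)" using Pa_fin by auto
    fix p assume p: "p \<in> Pa E S - S"
    then obtain x where x: "x \<in> S" "(p,x) \<in> E" unfolding Pa_def by auto
    have pV: "p \<in> V" using x EV by auto
    obtain s2 where s2: "s2 \<in> S'" "(p,s2) \<in> via E W"
    proof (cases "x \<in> S'")
      case True then show ?thesis using that via_E[OF x(2)] by blast
    next
      case False
      then have "x \<in> T" using x unfolding S_def by auto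
      then obtain s2 where "s2 \<in> S'" "(x,s2) \<in> via E W" using Tin by blast
      then show ?thesis using that via_pre[OF x(2)] \<open>x \<in> T\<close> TW by blast
    qed
    show "det p ?B0 ?K0"
    proof (cases "p \<in> W")
      case False
      have "(p,s2) \<in> margE V E W" unfolding margE_def using pV False s2 S'VW by auto
      then have "p \<in> ?B0" unfolding Pa_def using s2(1) p False unfolding S_def by auto
      then show ?thesis by (rule det_base)
    next
      case True
      have pT: "p \<notin> T" using p unfolding S_def by auto
      show ?thesis
      proof (rule det_mono[OF det_W[OF WV True]])
        show "{a \<in> V - W. (a,p) \<in> via E W} \<subseteq> ?B0"
        proof
          fix a assume a: "a \<in> {a \<in> V - W. (a,p) \<in> via E W}"
          then have "(a,s2) \<in> via E W" using via_trans[OF _ True s2(2)] by blast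
          then have "(a,s2) \<in> margE V E W" unfolding margE_def using a s2 S'VW by auto
          moreover have "a \<notin> S'"
          proof
            assume "a \<in> S'"
            then have "p \<in> T" unfolding T_def using True a s2 by blast
            then show False using pT by simp
          qed
          ultimately show "a \<in> ?B0" unfolding Pa_def using s2(1) by auto
        qed
        show "{F \<in> maxH H. \<exists>w\<in>F \<inter> W. (w,p) \<in> (E \<inter> W \<times> W)\<^sup>*} \<subseteq> ?K0"
        proof
          fix F assume F: "F \<in> {F \<in> maxH H. \<exists>w\<in>F \<inter> W. (w,p) \<in> (E \<inter> W \<times> W)\<^sup>*}"
          then obtain w where w: "w \<in> F" "w \<in> W" "(w,p) \<in> (E \<inter> W \<times> W)\<^sup>*" by auto
          have "(w,s2) \<in> via E W" using via_pre_star[OF w(3) s2(2)] .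
          then show "F \<in> ?K0" using F w s2(1) by blast
        qed
      qed
    qed
  qed
qed

end

theorem mainTheorem12:
  fixes V :: "'v set" and E :: "('v \<times> 'v) set" and H :: "'v set set"
    and M :: "'v \<Rightarrow> 'x measure" and P :: "('v \<Rightarrow> 'x) measure" and W :: "'v set"
  assumes "HEDG V E H"
    and "\<forall>v\<in>V. standard_borel (M v)"
    and "prob_space P" and "sets P = sets (PiM V M)"
    and "lsSEP V E H M P TYPE('w) TYPE('n)"
    and "W \<subseteq> V"
  shows "lsSEP (V - W) (margE V E W) (margH V E H W) M
           (distr P (PiM (V - W) M) (\<lambda>x. restrict x (V - W)))
           TYPE('w) TYPE('v set \<Rightarrow> 'n)"
proof -
  note hedg = assms(1) and WV = assms(6)
  obtain \<Omega> :: "'w measure" and N :: "'v set \<Rightarrow> 'n measure" and Ev :: "'v set \<Rightarrow> 'w \<Rightarrow> 'n"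
     and f :: "'v \<Rightarrow> ('v \<Rightarrow> 'x) \<times> ('v set \<Rightarrow> 'n) \<Rightarrow> 'x" and X :: "'v \<Rightarrow> 'w \<Rightarrow> 'x"
     and g :: "'v set \<Rightarrow> 'v \<Rightarrow> ('v \<Rightarrow> 'x) \<times> ('v set \<Rightarrow> 'n) \<Rightarrow> 'x"
    where ps: "prob_space \<Omega>"
      and NE: "\<forall>F\<in>maxH H. standard_borel (N F) \<and> Ev F \<in> measurable \<Omega> (N F)"
      and ind: "prob_space.indep_vars \<Omega> N Ev (maxH H)"
      and Xm: "\<forall>v\<in>V. X v \<in> measurable \<Omega> (M v)"
      and distrP: "distr \<Omega> (PiM V M) (\<lambda>\<omega>. restrict (\<lambda>v. X v \<omega>) V) = P"
      and gl: "\<forall>S. is_loop V E S \<longrightarrow> (\<forall>v\<in>S.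
          g S v \<in> measurable
            (PiM (Pa E S - S) M \<Otimes>\<^sub>M PiM {F \<in> maxH H. F \<inter> S \<noteq> {}} N) (M v) \<and>
          (AE \<omega> in \<Omega>. X v \<omega> = g S v (restrict (\<lambda>u. X u \<omega>) (Pa E S - S),
                                        restrict (\<lambda>F. Ev F \<omega>) {F \<in> maxH H. F \<inter> S \<noteq> {}})))"
    using assms(5) unfolding lsSEP_def by blast
  interpret lsctx V E H M \<Omega> N Ev X g
    by unfold_locales (use hedg gl in blast)+
  let ?E' = "margE V E W"
  let ?H' = "margH V E H W"
  define Fs where "Fs = (\<lambda>F. {s. s \<in> V - W \<and> (s \<in> F - W \<or> (\<exists>u1\<in>F. u1 \<in> W \<and> (u1,s) \<in> via E W))})"
  have finH': "finite ?H'"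
    by (rule finite_subset[of _ "Pow (V - W)"]) (auto simp: margH_def EV(2))
  have finH: "finite H" using HV EV(2) by (simp add: finite_subset)
  have Fs_in: "Fs F \<in> ?H'" if "F \<in> H" for F
  proof -
    have "F \<subseteq> V" using HV that by auto
    then show ?thesis unfolding margH_def Fs_def using that by blast
  qed
  have "\<exists>m. m \<in> maxH ?H' \<and> Fs F \<subseteq> m" if FH: "F \<in> H" for F
  proof -
    obtain m where m: "m \<in> ?H'" "Fs F \<subseteq> m" "\<forall>b\<in>?H'. m \<subseteq> b \<longrightarrow> m = b"
      using finite_has_maximal2[OF finH' Fs_in[OF FH]] by blast
    then have "m \<in> maxH ?H'" unfolding maxH_def by auto
    then show ?thesis using m(2) by blast
  qed
  then obtain phi where phi: "\<And>F. F \<in> H \<Longrightarrow> phi F \<in> maxH ?H' \<and> Fs F \<subseteq> phi F"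
    by metis
  have maxHH: "maxH H \<subseteq> H" unfolding maxH_def by auto
  define asg where "asg = (\<lambda>F'. {F \<in> maxH H. phi F = F'})"
  define N' where "N' = (\<lambda>F'. PiM (asg F') N)"
  define Ev' where "Ev' = (\<lambda>F' \<omega>. restrict (\<lambda>F. Ev F \<omega>) (asg F'))"
  have asg_sub: "asg F' \<subseteq> maxH H" for F' unfolding asg_def by auto
  have gex: "\<exists>h. (is_loop (V - W) ?E' S \<and> v \<in> S) \<longrightarrow>
          h \<in> measurable
            (PiM (Pa ?E' S - S) M \<Otimes>\<^sub>M PiM {F \<in> maxH ?H'. F \<inter> S \<noteq> {}} N') (M v) \<and>
          (AE \<omega> in \<Omega>. X v \<omega> = h (restrict (\<lambda>u. X u \<omega>) (Pa ?E' S - S),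
                                        restrict (\<lambda>F. Ev' F \<omega>) {F \<in> maxH ?H'. F \<inter> S \<noteq> {}}))" for S v
  proof (cases "is_loop (V - W) ?E' S \<and> v \<in> S")
    case False then show ?thesis by blast
  next
    case True
    let ?K0 = "{F \<in> maxH H. \<exists>s\<in>S. s \<in> F - W \<or> (\<exists>u1\<in>F. u1 \<in> W \<and> (u1,s) \<in> via E W)}"
    let ?K0' = "{F \<in> maxH ?H'. F \<inter> S \<noteq> {}}"
    have SVW: "S \<subseteq> V - W" using True unfolding is_loop_def by blast
    obtain h0 where h0: "h0 \<in> measurable (PiM (Pa ?E' S - S) M \<Otimes>\<^sub>M PiM ?K0 N) (M v)"
      "AE \<omega> in \<Omega>. X v \<omega> = h0 (restrict (\<lambda>u. X u \<omega>) (Pa ?E' S - S), restrict (\<lambda>F. Ev F \<omega>) ?K0)"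
      using det_newloop[OF WV conjunct1[OF True] conjunct2[OF True]] unfolding det_def by blast
    have phiK: "phi F \<in> ?K0' \<and> F \<in> asg (phi F)" if F: "F \<in> ?K0" for F
    proof -
      have FH: "F \<in> H" using F maxHH by auto
      obtain s where s: "s \<in> S" "s \<in> F - W \<or> (\<exists>u1\<in>F. u1 \<in> W \<and> (u1,s) \<in> via E W)" using F by blast
      have "s \<in> Fs F" unfolding Fs_def using s SVW by auto
      then have "s \<in> phi F" using phi[OF FH] by auto
      then show ?thesis using phi[OF FH] s(1) F unfolding asg_def by auto
    qed
    define c where "c = (\<lambda>y::'v set \<Rightarrow> 'v set \<Rightarrow> 'n. \<lambda>F\<in>?K0. y (phi F) F)"
    have cm: "c \<in> measurable (PiM ?K0' N') (PiM ?K0 N)"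
      unfolding c_def
    proof (rule measurable_restrict)
      fix F assume F: "F \<in> ?K0"
      have 1: "(\<lambda>y. y (phi F)) \<in> measurable (PiM ?K0' N') (N' (phi F))"
        using phiK[OF F] by (intro measurable_component_singleton) blast
      have 2: "(\<lambda>z. z F) \<in> measurable (N' (phi F)) (N F)"
        unfolding N'_def using phiK[OF F] by (intro measurable_component_singleton) blast
      show "(\<lambda>y. y (phi F) F) \<in> measurable (PiM ?K0' N') (N F)"
        using measurable_compose[OF 1 2] by simp
    qed
    define h where "h = (\<lambda>z. h0 (fst z, c (snd z)))"
    have "(\<lambda>z. (fst z, c (snd z))) \<in> measurable (PiM (Pa ?E' S - S) M \<Otimes>\<^sub>M PiM ?K0' N')
         (PiM (Pa ?E' S - S) M \<Otimes>\<^sub>M PiM ?K0 N)"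
      by (intro measurable_Pair measurable_fst measurable_compose[OF measurable_snd cm])
    then have hm: "h \<in> measurable (PiM (Pa ?E' S - S) M \<Otimes>\<^sub>M PiM ?K0' N') (M v)"
      unfolding h_def using h0(1) by (rule measurable_compose)
    have ceq: "c (restrict (\<lambda>F. Ev' F \<omega>) ?K0') = restrict (\<lambda>F. Ev F \<omega>) ?K0" for \<omega>
    proof
      fix F show "c (restrict (\<lambda>F. Ev' F \<omega>) ?K0') F = restrict (\<lambda>F. Ev F \<omega>) ?K0 F"
      proof (cases "F \<in> ?K0")
        case True
        then show ?thesis using phiK[OF True] unfolding c_def Ev'_def by simp
      next
        case False
        show ?thesis by (simp only: c_def restrict_def if_not_P[OF False])
      qed
    qed
    have "AE \<omega> in \<Omega>. X v \<omega> = h (restrict (\<lambda>u. X u \<omega>) (Pa ?E' S - S), restrict (\<lambda>F. Ev' F \<omega>) ?K0')"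
      using h0(2) unfolding h_def by (simp add: ceq)
    then show ?thesis using hm by blast
  qed
  have "\<forall>S. \<exists>gS. \<forall>v. (is_loop (V - W) ?E' S \<and> v \<in> S) \<longrightarrow>
          gS v \<in> measurable
            (PiM (Pa ?E' S - S) M \<Otimes>\<^sub>M PiM {F \<in> maxH ?H'. F \<inter> S \<noteq> {}} N') (M v) \<and>
          (AE \<omega> in \<Omega>. X v \<omega> = gS v (restrict (\<lambda>u. X u \<omega>) (Pa ?E' S - S),
                                        restrict (\<lambda>F. Ev' F \<omega>) {F \<in> maxH ?H'. F \<inter> S \<noteq> {}}))"
    by (intro allI choice) (rule gex)
  then have "\<exists>g'. \<forall>S. \<forall>v. (is_loop (V - W) ?E' S \<and> v \<in> S) \<longrightarrow>
          g' S v \<in> measurable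
            (PiM (Pa ?E' S - S) M \<Otimes>\<^sub>M PiM {F \<in> maxH ?H'. F \<inter> S \<noteq> {}} N') (M v) \<and>
          (AE \<omega> in \<Omega>. X v \<omega> = g' S v (restrict (\<lambda>u. X u \<omega>) (Pa ?E' S - S),
                                        restrict (\<lambda>F. Ev' F \<omega>) {F \<in> maxH ?H'. F \<inter> S \<noteq> {}}))"
    by (rule choice)
  then obtain g' where g': "\<And>S v. is_loop (V - W) ?E' S \<Longrightarrow> v \<in> S \<Longrightarrow>
          g' S v \<in> measurable
            (PiM (Pa ?E' S - S) M \<Otimes>\<^sub>M PiM {F \<in> maxH ?H'. F \<inter> S \<noteq> {}} N') (M v) \<and>
          (AE \<omega> in \<Omega>. X v \<omega> = g' S v (restrict (\<lambda>u. X u \<omega>) (Pa ?E' S - S),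
                                        restrict (\<lambda>F. Ev' F \<omega>) {F \<in> maxH ?H'. F \<inter> S \<noteq> {}}))"
    by blast
  define f' where "f' = (\<lambda>v z. g' {v} v (restrict (fst z) (Pa ?E' {v} - {v}), snd z))"
  have single: "is_loop (V - W) ?E' {v}" if "v \<in> V - W" for v
    unfolding is_loop_def using that by auto
  have sing_eq: "{F \<in> maxH ?H'. v \<in> F} = {F \<in> maxH ?H'. F \<inter> {v} \<noteq> {}}" for v by auto
  have c4: "\<forall>v\<in>V - W. f' v \<in> measurable
          (PiM (Pa ?E' {v}) M \<Otimes>\<^sub>M PiM {F \<in> maxH ?H'. v \<in> F} N') (M v)"
  proof
    fix v assume v: "v \<in> V - W"
    have "(\<lambda>z. (restrict (fst z) (Pa ?E' {v} - {v}), snd z)) \<in>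
       measurable (PiM (Pa ?E' {v}) M \<Otimes>\<^sub>M PiM {F \<in> maxH ?H'. v \<in> F} N')
         (PiM (Pa ?E' {v} - {v}) M \<Otimes>\<^sub>M PiM {F \<in> maxH ?H'. F \<inter> {v} \<noteq> {}} N')"
      unfolding sing_eq
      by (intro measurable_Pair measurable_snd measurable_compose[OF measurable_fst measurable_restrict_subset]) auto
    then show "f' v \<in> measurable (PiM (Pa ?E' {v}) M \<Otimes>\<^sub>M PiM {F \<in> maxH ?H'. v \<in> F} N') (M v)"
      unfolding f'_def using conjunct1[OF g'[OF single[OF v] singletonI]] by (rule measurable_compose)
  qed
  have c6: "\<forall>v\<in>V - W. AE \<omega> in \<Omega>. X v \<omega> = f' v (restrict (\<lambda>u. X u \<omega>) (Pa ?E' {v}),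
                                         restrict (\<lambda>F. Ev' F \<omega>) {F \<in> maxH ?H'. v \<in> F})"
  proof
    fix v assume v: "v \<in> V - W"
    have "Pa ?E' {v} \<inter> (Pa ?E' {v} - {v}) = Pa ?E' {v} - {v}" by auto
    then show "AE \<omega> in \<Omega>. X v \<omega> = f' v (restrict (\<lambda>u. X u \<omega>) (Pa ?E' {v}),
                                         restrict (\<lambda>F. Ev' F \<omega>) {F \<in> maxH ?H'. v \<in> F})"
      using conjunct2[OF g'[OF single[OF v] singletonI]] unfolding f'_def sing_eq by simp
  qed
  have c2: "\<forall>F\<in>maxH ?H'. standard_borel (N' F) \<and> Ev' F \<in> measurable \<Omega> (N' F)"
  proof
    fix F assume F: "F \<in> maxH ?H'"
    have "finite (asg F)" using asg_sub maxHH finH by (meson finite_subset)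
    then have "standard_borel (N' F)" unfolding N'_def
      using NE asg_sub by (intro standard_borel_PiM) auto
    moreover have "Ev' F \<in> measurable \<Omega> (N' F)" unfolding N'_def Ev'_def
      using NE asg_sub by (intro measurable_restrict) auto
    ultimately show "standard_borel (N' F) \<and> Ev' F \<in> measurable \<Omega> (N' F)" by blast
  qed
  have c3: "prob_space.indep_vars \<Omega> N' Ev' (maxH ?H')"
    unfolding N'_def Ev'_def
  proof (rule prob_space.indep_vars_restrict[OF ps ind])
    show "asg j \<subseteq> maxH H" for j by (rule asg_sub)
    show "disjoint_family_on asg (maxH ?H')" unfolding disjoint_family_on_def asg_def by auto
  qed
  have c5: "\<forall>v\<in>V - W. X v \<in> measurable \<Omega> (M v)" using Xm by auto
  have c7: "distr \<Omega> (PiM (V - W) M) (\<lambda>\<omega>. restrict (\<lambda>v. X v \<omega>) (V - W)) =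
            distr P (PiM (V - W) M) (\<lambda>x. restrict x (V - W))"
  proof -
    have m1: "(\<lambda>\<omega>. restrict (\<lambda>v. X v \<omega>) V) \<in> measurable \<Omega> (PiM V M)"
      using Xm by (intro measurable_restrict) auto
    have m2: "(\<lambda>x. restrict x (V - W)) \<in> measurable (PiM V M) (PiM (V - W) M)"
      by (rule measurable_restrict_subset) auto
    have "V \<inter> (V - W) = V - W" by auto
    then show ?thesis unfolding distrP[symmetric] distr_distr[OF m2 m1] by (simp add: comp_def)
  qed
  have c8: "\<forall>S. is_loop (V - W) ?E' S \<longrightarrow> (\<forall>v\<in>S.
          g' S v \<in> measurable
            (PiM (Pa ?E' S - S) M \<Otimes>\<^sub>M PiM {F \<in> maxH ?H'. F \<inter> S \<noteq> {}} N') (M v) \<and>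
          (AE \<omega> in \<Omega>. X v \<omega> = g' S v (restrict (\<lambda>u. X u \<omega>) (Pa ?E' S - S),
                                        restrict (\<lambda>F. Ev' F \<omega>) {F \<in> maxH ?H'. F \<inter> S \<noteq> {}})))"
    using g' by blast
  show ?thesis
    unfolding lsSEP_def
    by (rule exI[of _ \<Omega>], rule exI[of _ N'], rule exI[of _ Ev'], rule exI[of _ f'],
        rule exI[of _ X], rule exI[of _ g'], intro conjI ps c2 c3 c4 c5 c6 c7 c8)
qed

end
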